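(* Let $d\ge2$, let $\mathcal{G}$ be a strongly maximal stochastic subgroup of $\mathrm{O}(d^2)$, and let $G$ be its orbital germ. Then $\overline{\mathrm{conv}}(G)$ is the unique qplex $Q$ such that $\mathcal{G}=\mathcal{G}(Q)$.
   Context: Fix an integer $d\ge 2$. $\mathrm{O}(d^2)$ is the group of real orthogonal $d^2\times d^2$ matrices. $\langle\cdot,\cdot\rangle$ is the standard inner product on $\mathbb{R}^{d^2}$, $\|\cdot\|$ the Euclidean norm; $\overline{\mathrm{conv}}$ denotes closed convex hull. $\Delta=\{p\in\mathbb{R}^{d^2}: p(i)\ge0,\ \sum_ip(i)=1\}$; $H=\{u\in\mathbb{R}^{d^2}:\sum_i u(i)=1\}$; $c=(1/d^2,\dots,1/d^2)$. For $A\subseteq H$ the polar is $A^*=\{u\in H:\langle u,v\rangle\ge\frac{1}{d(d+1)}\ \forall v\in A\}$. Out-ball $B_{\rm o}=\{u\in H:\|u-c\|\le r_{\rm o}\}$, $r_{\rm o}^2=\frac{d-1}{d^2(d+1)}$. A qplex is a set $Q\subseteq\Delta\cap B_{\rm o}$ with $Q^*=Q$. A measurement is an array $r(i|j)\ge0$ with $\sum_i r(i|j)=1$ for every $j$; for $q\in Q$, $q_r(i)=\sum_j[(d+1)q(j)-\frac1d]r(i|j)$; it is $Q$-preserving if $\{q_r:q\in Q\}=Q$; its stretched measurement matrix is $R_{ij}=(d+1)r(i|j)-\frac1d\sum_k r(i|k)$. The preservation group $\mathcal{G}(Q)$ is the set of stretched measurement matrices of $Q$-preserving measurements. A subgroup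 $\mathcal{G}\subseteq\mathrm{O}(d^2)$ is stochastic if every $R\in\mathcal{G}$ satisfies $R_{ij}\ge-\frac1d$ for all $i,j$ and $Rc=c$. For a stochastic subgroup $\mathcal{G}$ and $R\in\mathcal{G}$ set $s^R_i(j)=\frac{dR_{ij}+1}{d(d+1)}$; the orbital germ of $\mathcal{G}$ is $G=\{s^R_i: R\in\mathcal{G},\ i=1,\dots,d^2\}$. A stochastic subgroup is maximal if it is not contained in any strictly larger stochastic subgroup, and strongly maximal if it is maximal and $\overline{\mathrm{conv}}$ of its orbital germ is a qplex. *)

theory Defs
  imports "HOL-Analysis.Analysis"
begin

text \<open>Vectors in R^(d^2) are modelled as real^'n with CARD('n) = d^2.\<close>

definition prob_simplex :: "(real^'n) set" where
  "prob_simplex = {p. (\<forall>i. p $ i \<ge> 0) \<and> (\<Sum>i\<in>UNIV. p $ i) = 1}"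

definition hypH :: "(real^'n) set" where
  "hypH = {u. (\<Sum>i\<in>UNIV. u $ i) = 1}"

definition cvec :: "nat \<Rightarrow> real^'n" where
  "cvec d = (\<chi> i. 1 / (real d)^2)"

definition qpolar :: "nat \<Rightarrow> (real^'n) set \<Rightarrow> (real^'n) set" where
  "qpolar d A = {u \<in> hypH. \<forall>v\<in>A. inner u v \<ge> 1 / (real d * (real d + 1))}"

definition out_ball :: "nat \<Rightarrow> (real^'n) set" where
  "out_ball d = {u \<in> hypH. norm (u - cvec d) \<le> sqrt ((real d - 1) / ((real d)^2 * (real d + 1)))}"

definition qplex :: "nat \<Rightarrow> (real^'n) set \<Rightarrow> bool" where
  "qplex d Q \<longleftrightarrow> Q \<subseteq> prob_simplex \<inter> out_ball d \<and> qpolar d Q = Q"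

text \<open>A measurement: r i j stands for r(i|j).\<close>
definition measurement :: "('n \<Rightarrow> 'n \<Rightarrow> real) \<Rightarrow> bool" where
  "measurement r \<longleftrightarrow> (\<forall>i j. r i j \<ge> 0) \<and> (\<forall>j. (\<Sum>i\<in>UNIV. r i j) = 1)"

definition meas_apply :: "nat \<Rightarrow> ('n \<Rightarrow> 'n \<Rightarrow> real) \<Rightarrow> real^'n \<Rightarrow> real^'n" where
  "meas_apply d r q = (\<chi> i. \<Sum>j\<in>UNIV. ((real d + 1) * q $ j - 1 / real d) * r i j)"

definition Q_preserving :: "nat \<Rightarrow> (real^'n) set \<Rightarrow> ('n \<Rightarrow> 'n \<Rightarrow> real) \<Rightarrow> bool" where
  "Q_preserving d Q r \<longleftrightarrow> meas_apply d r ` Q = Q"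

definition stretched :: "nat \<Rightarrow> ('n \<Rightarrow> 'n \<Rightarrow> real) \<Rightarrow> real^'n^'n" where
  "stretched d r = (\<chi> i j. (real d + 1) * r i j - (1 / real d) * (\<Sum>k\<in>UNIV. r i k))"

definition preservation_group :: "nat \<Rightarrow> (real^'n) set \<Rightarrow> (real^'n^'n) set" where
  "preservation_group d Q =
     {R. \<exists>r. measurement r \<and> Q_preserving d Q r \<and> R = stretched d r}"

text \<open>Subgroup of the orthogonal group O(d^2).\<close>
definition orth_subgroup :: "(real^'n^'n) set \<Rightarrow> bool" where
  "orth_subgroup \<G> \<longleftrightarrow> \<G> \<subseteq> {A. orthogonal_matrix A} \<and> mat 1 \<in> \<G> \<and>
     (\<forall>A\<in>\<G>. \<forall>B\<in>\<G>. A ** B \<in> \<G>) \<and> (\<forall>A\<in>\<G>. matrix_inv A \<in> \<G>)"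

definition stochastic_subgroup :: "nat \<Rightarrow> (real^'n^'n) set \<Rightarrow> bool" where
  "stochastic_subgroup d \<G> \<longleftrightarrow> orth_subgroup \<G> \<and>
     (\<forall>R\<in>\<G>. (\<forall>i j. R $ i $ j \<ge> - 1 / real d) \<and> R *v cvec d = cvec d)"

definition orbital_germ :: "nat \<Rightarrow> (real^'n^'n) set \<Rightarrow> (real^'n) set" where
  "orbital_germ d \<G> =
     {(\<chi> j. (real d * R $ i $ j + 1) / (real d * (real d + 1))) | R i. R \<in> \<G>}"

definition maximal_stochastic :: "nat \<Rightarrow> (real^'n^'n) set \<Rightarrow> bool" where
  "maximal_stochastic d \<G> \<longleftrightarrow> stochastic_subgroup d \<G> \<and>
     (\<forall>\<G>'. stochastic_subgroup d \<G>' \<and> \<G> \<subseteq> \<G>' \<longrightarrow> \<G>' = \<G>)"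

definition strongly_maximal :: "nat \<Rightarrow> (real^'n^'n) set \<Rightarrow> bool" where
  "strongly_maximal d \<G> \<longleftrightarrow> maximal_stochastic d \<G> \<and>
     qplex d (closure (convex hull (orbital_germ d \<G>)))"

end

theory Submission
  imports Defs
begin

lemma a1: "(D::real) \<ge> 2 \<Longrightarrow> 1/D^2 + (D - 1) / (D^2 * (D + 1)) = 2 / (D * (D + 1))"
proof -
  assume "D \<ge> 2" then have h: "D > 0" "D + 1 > 0" by auto
  have e1: "1/D^2 = (D+1) / (D^2 * (D+1))" using h by simp
  have e2: "2 / (D * (D + 1)) = (2*D) / (D^2 * (D+1))" using h by (simp add: power2_eq_square)
  have "1/D^2 + (D - 1) / (D^2 * (D + 1)) = ((D+1) + (D-1)) / (D^2 * (D+1))"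
    by (simp only: e1 add_divide_distrib)
  also have "\<dots> = (2*D) / (D^2 * (D+1))" by simp
  finally show ?thesis using e2 by simp
qed
lemma a2: "(D::real) \<ge> 2 \<Longrightarrow> 1 / (D * (D + 1)) \<le> 1 / D^2"
  by (simp add: power2_eq_square frac_le)
lemma a3: "(D::real) \<ge> 2 \<Longrightarrow> (D+1) * ((D-1)/(D^2*(D+1))) * m + m/D^2 = m/D"
proof -
  assume "D \<ge> 2" then have h: "D > 0" "D + 1 > 0" by auto
  have "(D+1) * ((D-1)/(D^2*(D+1))) = (D-1)/D^2" using h by (simp add: power2_eq_square)
  then have "(D+1) * ((D-1)/(D^2*(D+1))) * m + m/D^2 = ((D-1)*m + m)/D^2" by (simp add: add_divide_distrib)
  also have "\<dots> = m/D" using h by (simp add: power2_eq_square algebra_simps)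
  finally show ?thesis .
qed
lemma a4: "(D::real) \<ge> 2 \<Longrightarrow> (D+1)^2 * ((D-1)/(D^2*(D+1))) + 1/D^2 = 1"
proof -
  assume "D \<ge> 2" then have h: "D > 0" "D + 1 > 0" by auto
  have "(D+1)^2 * ((D-1)/(D^2*(D+1))) = (D+1)*(D-1)/D^2" using h by (simp add: power2_eq_square)
  then have "(D+1)^2 * ((D-1)/(D^2*(D+1))) + 1/D^2 = ((D+1)*(D-1) + 1)/D^2" by (simp add: add_divide_distrib)
  also have "\<dots> = 1" using h by (simp add: power2_eq_square algebra_simps)
  finally show ?thesis .
qed
lemma a5:
  assumes "(D::real) \<ge> 2" "t \<ge> 0" "a \<ge> 0" "l > 0"
  shows "1/D^2 + (t - a/D^2)/((D+1)*(a+l)) \<ge> 1/(D*(D+1))"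
proof -
  have h: "D > 0" "D + 1 > 0" "a + l > 0" using assms by auto
  have lp: "l/D^2 > 0" using h assms by simp
  have "(a+l)/D^2 = a/D^2 + l/D^2" by (rule add_divide_distrib)
  then have "(t - a/D^2) \<ge> -((a+l)/D^2)" using lp assms by linarith
  then have "(t - a/D^2)/((D+1)*(a+l)) \<ge> (-((a+l)/D^2))/((D+1)*(a+l))"
    using h by (intro divide_right_mono) auto
  also have "(-((a+l)/D^2))/((D+1)*(a+l)) = - 1/(D^2*(D+1))" using h by simp
  finally have "1/D^2 + (t - a/D^2)/((D+1)*(a+l)) \<ge> 1/D^2 - 1/(D^2*(D+1))" by simp
  also have "1/D^2 - 1/(D^2*(D+1)) = 1/(D*(D+1))"
  proof -
    have e1: "1/D^2 = (D+1) / (D^2 * (D+1))" using h by simp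
    have "1/D^2 - 1/(D^2*(D+1)) = ((D+1) - 1)/(D^2*(D+1))" by (simp only: e1 diff_divide_distrib)
    also have "\<dots> = 1/(D*(D+1))" using h by (simp add: power2_eq_square)
    finally show ?thesis .
  qed
  finally show ?thesis .
qed



lemma cvec_comp[simp]: "cvec d $ i = 1 / (real d)^2"
  by (simp add: cvec_def)

lemma mv_comp: "(M *v y) $ i = inner (M $ i) (y::real^'n)"
  by (simp add: matrix_vector_mult_def inner_vec_def)

lemma sum_cvec:
  assumes "CARD('n) = d^2" "d \<ge> 2"
  shows "(\<Sum>i\<in>UNIV. (cvec d :: real^'n) $ i) = 1"
  using assms by simp

lemma cvec_hyp:
  assumes "CARD('n) = d^2" "d \<ge> 2"
  shows "(cvec d :: real^'n) \<in> hypH"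
  using sum_cvec[OF assms] by (simp add: hypH_def)

lemma inner_cvec: "inner (cvec d :: real^'n) u = (\<Sum>i\<in>UNIV. u$i) / (real d)^2"
  by (simp add: inner_vec_def sum_divide_distrib)

lemma inner_cvec_hyp: "u \<in> hypH \<Longrightarrow> inner (cvec d :: real^'n) u = 1 / (real d)^2"
  by (simp add: inner_cvec hypH_def)

lemma inner_cvec_hyp': "u \<in> hypH \<Longrightarrow> inner u (cvec d :: real^'n) = 1 / (real d)^2"
  by (metis inner_commute inner_cvec_hyp)

lemma inner_decomp:
  assumes "CARD('n) = d^2" "d \<ge> 2" "u \<in> hypH" "v \<in> hypH"
  shows "inner u (v::real^'n) = 1/(real d)^2 + inner (u - cvec d) (v - cvec d)"
  using assms cvec_hyp[OF assms(1,2)]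
  by (simp add: inner_diff_left inner_diff_right inner_cvec_hyp inner_cvec_hyp')





lemma hyp_iff:
  assumes "d \<ge> 2"
  shows "u \<in> hypH \<longleftrightarrow> inner (cvec d :: real^'n) u = 1 / (real d)^2"
  using assms by (auto simp: hypH_def inner_cvec)

lemma ro_sq:
  assumes "d \<ge> 2"
  shows "(sqrt ((real d - 1) / ((real d)^2 * (real d + 1))))^2 = (real d - 1) / ((real d)^2 * (real d + 1))"
  using assms by (simp add: real_sqrt_pow2)

lemma ro_pos:
  assumes "d \<ge> 2"
  shows "sqrt ((real d - 1) / ((real d)^2 * (real d + 1))) > 0"
proof -
  have "(real d - 1) / ((real d)^2 * (real d + 1)) > 0" using assms by (intro divide_pos_pos) auto
  then show ?thesis by simp
qed

lemma qp_hyp: "qplex d Q \<Longrightarrow> q \<in> Q \<Longrightarrow> q \<in> hypH"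
  by (auto simp: qplex_def out_ball_def)

lemma qp_nonneg: "qplex d Q \<Longrightarrow> q \<in> Q \<Longrightarrow> q $ i \<ge> 0"
  by (auto simp: qplex_def prob_simplex_def)

lemma qp_ball: "qplex d Q \<Longrightarrow> q \<in> Q \<Longrightarrow>
   norm (q - cvec d) \<le> sqrt ((real d - 1) / ((real d)^2 * (real d + 1)))"
  by (auto simp: qplex_def out_ball_def)

lemma qp_polar: "qplex d Q \<Longrightarrow> u \<in> hypH \<Longrightarrow> (\<And>v. v \<in> Q \<Longrightarrow> inner u v \<ge> 1 / (real d * (real d + 1)))
   \<Longrightarrow> u \<in> Q"
proof -
  assume a: "qplex d Q" "u \<in> hypH" "(\<And>v. v \<in> Q \<Longrightarrow> inner u v \<ge> 1 / (real d * (real d + 1)))"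
  then have "u \<in> qpolar d Q" by (auto simp: qpolar_def)
  then show "u \<in> Q" using a(1) by (simp add: qplex_def)
qed

lemma qp_c:
  assumes "CARD('n) = d^2" "d \<ge> 2" "qplex d (Q :: (real^'n) set)"
  shows "cvec d \<in> Q"
proof (rule qp_polar[OF assms(3) cvec_hyp[OF assms(1,2)]])
  fix v assume "v \<in> Q"
  then have "inner (cvec d) v = 1 / (real d)^2" using qp_hyp[OF assms(3)] inner_cvec_hyp by blast
  moreover have "1 / (real d * (real d + 1)) \<le> 1 / (real d)^2"
    using assms(2) a2[of "real d"] by simp
  ultimately show "1 / (real d * (real d + 1)) \<le> inner (cvec d) v" by simp
qed

lemma qp_inner_upper:
  assumes "CARD('n) = d^2" "d \<ge> 2" "qplex d (Q :: (real^'n) set)" "u \<in> Q" "v \<in> Q"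
  shows "inner u v \<le> 2 / (real d * (real d + 1))"
proof -
  define ro where "ro = sqrt ((real d - 1) / ((real d)^2 * (real d + 1)))"
  have "inner (u - cvec d) (v - cvec d) \<le> norm (u - cvec d) * norm (v - cvec d)"
    by (rule norm_cauchy_schwarz)
  also have "\<dots> \<le> ro * ro"
    using qp_ball[OF assms(3) assms(4)] qp_ball[OF assms(3) assms(5)] unfolding ro_def
    by (intro mult_mono) (use assms(2) in auto)
  also have "\<dots> = (real d - 1) / ((real d)^2 * (real d + 1))"
    using ro_sq[OF assms(2)] unfolding ro_def by (simp add: power2_eq_square)
  finally have h: "inner (u - cvec d) (v - cvec d) \<le> (real d - 1) / ((real d)^2 * (real d + 1))" .
  have "inner u v = 1/(real d)^2 + inner (u - cvec d) (v - cvec d)"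
    using inner_decomp[OF assms(1,2)] qp_hyp[OF assms(3)] assms(4,5) by blast
  also have "\<dots> \<le> 1/(real d)^2 + (real d - 1) / ((real d)^2 * (real d + 1))" using h by simp
  also have "\<dots> = 2 / (real d * (real d + 1))"
    using assms(2) a1[of "real d"] by simp
  finally show ?thesis .
qed




lemma rowlemma:
  fixes M :: "real^'n^'n" and Q :: "(real^'n) set"
  assumes card: "CARD('n) = d^2" and d2: "d \<ge> 2" and qp: "qplex d Q"
    and MQ: "\<And>y. y \<in> Q \<Longrightarrow> M *v y \<in> Q"
  shows "0 \<le> (\<Sum>j\<in>UNIV. M$i$j)"
    and "\<And>y. y \<in> Q \<Longrightarrow> (M *v y)$i \<le> (\<Sum>j\<in>UNIV. M$i$j) / real d"
    and "norm (M$i) \<le> (\<Sum>j\<in>UNIV. M$i$j)"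
proof -
  define D where "D = real d"
  define mu where "mu = (\<Sum>j\<in>UNIV. M$i$j)"
  define c where "c = (cvec d :: real^'n)"
  define ro where "ro = sqrt ((real d - 1) / ((real d)^2 * (real d + 1)))"
  define z where "z = (1/(D+1)) *\<^sub>R (M$i - mu *\<^sub>R c)"
  have D2: "D \<ge> 2" using d2 by (simp add: D_def)
  have Dp: "D > 0" "D + 1 > 0" "D^2 > 0" using D2 by auto
  have rop: "ro > 0" unfolding ro_def by (rule ro_pos[OF d2])
  have ro2: "ro^2 = (D - 1) / (D^2 * (D + 1))" unfolding ro_def D_def by (rule ro_sq[OF d2])
  have chyp: "c \<in> hypH" using cvec_hyp[OF card d2] by (simp add: c_def)
  have cQ: "c \<in> Q" using qp_c[OF card d2 qp] c_def by simp
  have icM: "inner c (M$i) = mu / D^2" by (simp add: c_def inner_cvec mu_def D_def)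
  have icM': "inner (M$i) c = mu / D^2" using icM by (simp add: inner_commute)
  have icc: "inner c c = 1/D^2" using inner_cvec_hyp[of c d] chyp by (simp add: c_def D_def)
  have icy: "inner c y = 1/D^2" if "y \<in> Q" for y
    using qp_hyp[OF qp that] inner_cvec_hyp[of y d] by (simp add: c_def D_def)
  have Mc: "(M *v c)$i = mu / D^2" by (simp add: mv_comp icM')
  have "(M *v c)$i \<ge> 0" using qp_nonneg[OF qp MQ[OF cQ]] .
  then have mu0: "0 \<le> mu" using Mc Dp by (simp add: zero_le_divide_iff)
  have izc: "inner z c = 0"
    by (simp add: z_def inner_diff_left icM' icc)
  have izc': "inner c z = 0" using izc by (simp add: inner_commute)
  have izy: "inner z y = ((M *v y)$i - mu/D^2)/(D+1)" if "y \<in> Q" for y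
    using icy[OF that] by (simp add: z_def inner_diff_left mv_comp)
  have Mi: "M$i = (D+1) *\<^sub>R z + mu *\<^sub>R c"
    using Dp by (simp add: z_def)
  have key: "norm z \<le> ro * (mu + l)" if l: "l > 0" for l
  proof -
    define u where "u = c + (1/(mu+l)) *\<^sub>R z"
    have ml: "mu + l > 0" using mu0 l by simp
    have uQ: "u \<in> Q"
    proof (rule qp_polar[OF qp])
      have "inner c u = 1/D^2"
        by (simp add: u_def inner_add_right icc izc')
      then show "u \<in> hypH" unfolding c_def D_def by (rule hyp_iff[OF d2, THEN iffD2])
    next
      fix v assume vQ: "v \<in> Q"
      have t0: "(M *v v)$i \<ge> 0" using qp_nonneg[OF qp MQ[OF vQ]] .
      have "inner u v = 1/D^2 + (1/(mu+l)) * (((M *v v)$i - mu/D^2)/(D+1))"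
        by (simp add: u_def inner_add_left icy[OF vQ] izy[OF vQ])
      also have "\<dots> = 1/D^2 + ((M *v v)$i - mu/D^2)/((D+1)*(mu+l))"
        by (simp add: mult.commute)
      finally have "inner u v = 1/D^2 + ((M *v v)$i - mu/D^2)/((D+1)*(mu+l))" .
      moreover have "1/D^2 + ((M *v v)$i - mu/D^2)/((D+1)*(mu+l)) \<ge> 1/(D*(D+1))"
        by (rule a5[OF D2 t0 mu0 l])
      ultimately show "1 / (real d * (real d + 1)) \<le> inner u v" by (simp add: D_def)
    qed
    have "norm (u - c) \<le> ro" using qp_ball[OF qp uQ] by (simp add: c_def ro_def)
    moreover have "norm (u - c) = norm z / (mu + l)" using ml by (simp add: u_def)
    ultimately have "norm z / (mu + l) \<le> ro" by simp
    then show ?thesis using ml by (simp add: pos_divide_le_eq mult.commute)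
  qed
  have nz: "norm z \<le> ro * mu"
  proof (rule field_le_epsilon)
    fix e :: real assume e: "e > 0"
    have "norm z \<le> ro * (mu + e / ro)" using key[of "e/ro"] e rop by simp
    also have "\<dots> = ro * mu + e" using rop by (simp add: distrib_left)
    finally show "norm z \<le> ro * mu + e" .
  qed
  show "0 \<le> (\<Sum>j\<in>UNIV. M$i$j)" using mu0 by (simp add: mu_def)
  show "(M *v y)$i \<le> (\<Sum>j\<in>UNIV. M$i$j) / real d" if yQ: "y \<in> Q" for y
  proof -
    have "(M *v y)$i = inner (M$i) y" by (simp add: mv_comp)
    also have "\<dots> = (D+1) * inner z y + mu / D^2"
      by (simp add: Mi inner_add_left icy[OF yQ])
    also have "inner z y = inner z (y - c)" by (simp add: inner_diff_right izc)
    also have "inner z (y - c) \<le> norm z * norm (y - c)" by (rule norm_cauchy_schwarz)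
    also have "\<dots> \<le> (ro * mu) * ro"
      using nz qp_ball[OF qp yQ] rop mu0 by (intro mult_mono) (auto simp: c_def ro_def)
    finally have "(M *v y)$i \<le> (D+1) * ((ro * mu) * ro) + mu / D^2"
      using Dp by simp
    also have "\<dots> = (D+1) * ro^2 * mu + mu/D^2" by (simp add: power2_eq_square)
    also have "\<dots> = mu / D" unfolding ro2 by (rule a3[OF D2])
    finally show ?thesis by (simp add: mu_def D_def)
  qed
  show "norm (M$i) \<le> (\<Sum>j\<in>UNIV. M$i$j)"
  proof -
    have "(norm (M$i))^2 = (D+1)^2 * (norm z)^2 + mu^2 * inner c c"
      unfolding Mi power2_norm_eq_inner
      by (simp add: inner_add_left inner_add_right izc izc' power2_eq_square algebra_simps)
    also have "\<dots> \<le> (D+1)^2 * (ro * mu)^2 + mu^2 / D^2"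
    proof -
      have "(norm z)^2 \<le> (ro * mu)^2" using nz by (intro power_mono) auto
      then have "(D+1)^2 * (norm z)^2 \<le> (D+1)^2 * (ro * mu)^2" by (intro mult_left_mono) auto
      then show ?thesis by (simp add: icc)
    qed
    also have "\<dots> = mu^2 * ((D+1)^2 * ro^2 + 1/D^2)" by (simp add: power_mult_distrib algebra_simps)
    also have "\<dots> = mu^2" unfolding ro2 using a4[OF D2] by simp
    finally have "(norm (M$i))^2 \<le> mu^2" .
    then have "norm (M$i) \<le> mu" using mu0 by (rule power2_le_imp_le)
    then show ?thesis by (simp add: mu_def)
  qed
qed




lemma sum_const_card:
  assumes "CARD('n) = d^2"
  shows "(\<Sum>i\<in>(UNIV::'n set). (a::real)) = real d^2 * a"
  using assms by simp

lemma mv_cvec: "(M *v (cvec d :: real^'n))$i = (\<Sum>j\<in>UNIV. M$i$j) / (real d)^2"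
  by (simp add: matrix_vector_mult_def sum_divide_distrib)

lemma norm_sq_sum: "(norm (x::real^'n))^2 = (\<Sum>j\<in>UNIV. (x$j)^2)"
  unfolding power2_norm_eq_inner inner_vec_def by (simp add: power2_eq_square)


lemma frob:
  fixes M S :: "real^'n^'n"
  shows "(\<Sum>i\<in>UNIV. \<Sum>j\<in>UNIV. (M$i$j - S$j$i)^2)
      = (\<Sum>i\<in>UNIV. \<Sum>j\<in>UNIV. (M$i$j)^2) + (\<Sum>i\<in>UNIV. \<Sum>j\<in>UNIV. (S$j$i)^2)
        - 2 * (\<Sum>i\<in>UNIV. \<Sum>j\<in>UNIV. M$i$j * S$j$i)"
proof -
  have "(M$i$j - S$j$i)^2 = (M$i$j)^2 + (S$j$i)^2 - 2 * (M$i$j * S$j$i)" for i j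
    by (simp add: power2_diff)
  then show ?thesis
    by (simp only: sum.distrib sum_subtractf sum_distrib_left)
qed

lemma sq_zero:
  fixes f :: "'n::finite \<Rightarrow> 'n \<Rightarrow> real"
  assumes "(\<Sum>i\<in>UNIV. \<Sum>j\<in>UNIV. (f i j)^2) \<le> 0"
  shows "f i j = 0"
proof -
  have nn: "\<And>i. 0 \<le> (\<Sum>j\<in>UNIV. (f i j)^2)" by (intro sum_nonneg) auto
  have "(\<Sum>i\<in>UNIV. \<Sum>j\<in>UNIV. (f i j)^2) = 0"
  proof -
    have "0 \<le> (\<Sum>i\<in>UNIV. \<Sum>j\<in>UNIV. (f i j)^2)" by (intro sum_nonneg nn)
    then show ?thesis using assms by linarith
  qed
  then have "(\<Sum>j\<in>UNIV. (f i j)^2) = 0"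
    using nn sum_nonneg_eq_0_iff[of UNIV "\<lambda>i. \<Sum>j\<in>UNIV. (f i j)^2"] by auto
  then have "(f i j)^2 = 0"
    using sum_nonneg_eq_0_iff[of UNIV "\<lambda>j. (f i j)^2"] by auto
  then show ?thesis by simp
qed

lemma surjtest:
  fixes M :: "real^'n^'n"
  assumes img: "(\<lambda>x. M *v x) ` Q = Q" and sp: "span Q = UNIV"
  shows "surj (\<lambda>x. M *v x)"
proof -
    have "subspace (range (\<lambda>x. M *v x))"
      using linear_subspace_image[OF matrix_vector_mul_linear[of M] subspace_UNIV] by simp
    moreover have "Q \<subseteq> range (\<lambda>x. M *v x)" using img by blast
    ultimately have "span Q \<subseteq> range (\<lambda>x. M *v x)" using span_minimal by blast
    then show ?thesis using sp by auto
qed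

lemma orth_lemma:
  fixes M :: "real^'n^'n" and Q :: "(real^'n) set"
  assumes card: "CARD('n) = d^2" and d2: "d \<ge> 2" and qp: "qplex d Q"
    and img: "(\<lambda>x. M *v x) ` Q = Q"
    and colsum: "\<And>j. (\<Sum>i\<in>UNIV. M$i$j) = 1"
    and gpts: "\<And>i. \<exists>g\<in>Q. g$i = 1 / real d"
    and sp: "span Q = UNIV"
  shows "orthogonal_matrix M \<and> M *v cvec d = cvec d"
proof -
  have D: "real d > 0" using d2 by simp
  have MQ: "M *v y \<in> Q" if "y \<in> Q" for y using img that by blast
  have ge1: "(\<Sum>j\<in>UNIV. M$i$j) \<ge> 1" for i
  proof -
    obtain g where g: "g \<in> Q" "g$i = 1 / real d" using gpts by blast
    then have "g \<in> (\<lambda>x. M *v x) ` Q" using img by simp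
    then obtain x where x: "x \<in> Q" "g = M *v x" by (rule imageE)
    have "1 / real d \<le> (\<Sum>j\<in>UNIV. M$i$j) / real d"
      using rowlemma(2)[OF card d2 qp MQ x(1), of i] x g by simp
    then show ?thesis using D by (simp add: divide_le_cancel)
  qed
  have total: "(\<Sum>i\<in>UNIV. \<Sum>j\<in>UNIV. M$i$j) = real d^2"
    by (subst sum.swap) (simp add: colsum card)
  have "(\<Sum>i\<in>UNIV. ((\<Sum>j\<in>UNIV. M$i$j) - 1)) = 0"
    by (simp add: sum_subtractf total card)
  moreover have "\<forall>i\<in>UNIV. 0 \<le> (\<Sum>j\<in>UNIV. M$i$j) - 1" using ge1 by simp
  ultimately have "(\<Sum>j\<in>UNIV. M$i$j) - 1 = 0" for i
    using sum_nonneg_eq_0_iff[of UNIV "\<lambda>i. (\<Sum>j\<in>UNIV. M$i$j) - 1"] by auto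
  then have mu1: "(\<Sum>j\<in>UNIV. M$i$j) = 1" for i by simp
  have Mc: "M *v cvec d = cvec d"
    by (simp add: vec_eq_iff mv_cvec mu1)
  have rowM: "norm (M$i) \<le> 1" for i
    using rowlemma(3)[OF card d2 qp MQ, of i] mu1 by simp
  have surj: "surj (\<lambda>x. M *v x)"
  proof -
    show ?thesis using surjtest[OF img sp] .
  qed
  then have "\<exists>B. M ** B = mat 1" using matrix_right_invertible_surjective[of M] by simp
  then obtain S where MS: "M ** S = mat 1" by blast
  then have SM: "S ** M = mat 1" using matrix_left_right_inverse[of M S] by simp
  have SQ: "S *v y \<in> Q" if "y \<in> Q" for y
  proof -
    have "y \<in> (\<lambda>x. M *v x) ` Q" using img that by simp
    then obtain x where x: "x \<in> Q" "y = M *v x" by (rule imageE)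
    have "S *v y = (S ** M) *v x" using x(2) by (simp add: matrix_vector_mul_assoc)
    then show ?thesis using x(1) SM by simp
  qed
  have Sc: "S *v cvec d = cvec d"
  proof -
    have "S *v cvec d = S *v (M *v cvec d)" using Mc by simp
    also have "\<dots> = cvec d" by (simp add: matrix_vector_mul_assoc SM)
    finally show ?thesis .
  qed
  have muS: "(\<Sum>j\<in>UNIV. S$i$j) = 1" for i
  proof -
    have "(S *v cvec d)$i = 1 / (real d)^2" using Sc by simp
    then show ?thesis using D by (simp add: mv_cvec)
  qed
  have rowS: "norm (S$i) \<le> 1" for i
    using rowlemma(3)[OF card d2 qp SQ, of i] muS by simp
  have tr: "(\<Sum>i\<in>UNIV. \<Sum>j\<in>UNIV. M$i$j * S$j$i) = real d^2"
  proof -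
    have "(\<Sum>j\<in>UNIV. M$i$j * S$j$i) = 1" for i
    proof -
      have "(M ** S)$i$i = 1" using MS by (simp add: mat_def)
      then show ?thesis by (simp add: matrix_matrix_mult_def)
    qed
    then show ?thesis using card by simp
  qed
  have nM: "(\<Sum>i\<in>UNIV. \<Sum>j\<in>UNIV. (M$i$j)^2) \<le> real d^2"
  proof -
    have "(\<Sum>i\<in>UNIV. \<Sum>j\<in>UNIV. (M$i$j)^2) \<le> (\<Sum>i\<in>(UNIV::'n set). 1)"
    proof (rule sum_mono)
      fix i
      have "(norm (M$i))^2 \<le> 1" using rowM[of i] by (simp add: power_le_one)
      then show "(\<Sum>j\<in>UNIV. (M$i$j)^2) \<le> 1" by (simp add: norm_sq_sum)
    qed
    then show ?thesis using card by simp
  qed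
  have nS: "(\<Sum>i\<in>UNIV. \<Sum>j\<in>UNIV. (S$j$i)^2) \<le> real d^2"
  proof -
    have "(\<Sum>i\<in>UNIV. \<Sum>j\<in>UNIV. (S$j$i)^2) = (\<Sum>j\<in>UNIV. \<Sum>i\<in>UNIV. (S$j$i)^2)"
      by (rule sum.swap)
    also have "\<dots> \<le> (\<Sum>j\<in>(UNIV::'n set). 1)"
    proof (rule sum_mono)
      fix j
      have "(norm (S$j))^2 \<le> 1" using rowS[of j] by (simp add: power_le_one)
      then show "(\<Sum>i\<in>UNIV. (S$j$i)^2) \<le> 1" by (simp add: norm_sq_sum)
    qed
    finally show ?thesis using card by simp
  qed
  have "(\<Sum>i\<in>UNIV. \<Sum>j\<in>UNIV. (M$i$j - S$j$i)^2) \<le> 0"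
    unfolding frob using nM nS tr by simp
  then have "\<forall>i j. M$i$j - S$j$i = 0" using sq_zero[of "\<lambda>i j. M$i$j - S$j$i"] by blast
  then have "S = transpose M" by (simp add: vec_eq_iff transpose_def)
  then have "transpose M ** M = mat 1" using SM by simp
  then have "orthogonal_matrix M" by (simp add: orthogonal_matrix)
  then show ?thesis using Mc by simp
qed




lemma mv_germ:
  fixes M A :: "real^'n^'n"
  shows "(M *v (\<chi> j. (D * A$i$j + 1)/E))$k = (D * (A ** transpose M)$i$k + (\<Sum>j\<in>UNIV. M$k$j)) / E"
proof -
  have "(M *v (\<chi> j. (D * A$i$j + 1)/E))$k = (\<Sum>j\<in>UNIV. M$k$j * ((D * A$i$j + 1)/E))"
    by (simp add: matrix_vector_mult_def)
  also have "\<dots> = (\<Sum>j\<in>UNIV. (D * (A$i$j * M$k$j) + M$k$j) / E)"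
    by (rule sum.cong) (auto simp: algebra_simps)
  also have "\<dots> = (D * (\<Sum>j\<in>UNIV. A$i$j * M$k$j) + (\<Sum>j\<in>UNIV. M$k$j)) / E"
    by (simp add: sum_divide_distrib[symmetric] sum.distrib sum_distrib_left)
  also have "(\<Sum>j\<in>UNIV. A$i$j * M$k$j) = (A ** transpose M)$i$k"
    by (simp add: matrix_matrix_mult_def transpose_def)
  finally show ?thesis .
qed

lemma orth_inv:
  fixes R :: "real^'n^'n"
  assumes "orthogonal_matrix R"
  shows "matrix_inv R = transpose R"
proof -
  have ex: "\<exists>B. R ** B = mat 1 \<and> B ** R = mat 1"
    using assms by (auto simp: orthogonal_matrix_def)
  define B where "B = matrix_inv R"
  have "R ** B = mat 1 \<and> B ** R = mat 1"
    unfolding B_def matrix_inv_def using someI_ex[OF ex] .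
  then have "B = (transpose R ** R) ** B" using assms by (simp add: orthogonal_matrix_def)
  also have "\<dots> = transpose R ** (R ** B)" by (simp add: matrix_mul_assoc)
  also have "\<dots> = transpose R" using \<open>R ** B = mat 1 \<and> B ** R = mat 1\<close> by simp
  finally show ?thesis by (simp add: B_def)
qed

lemma rowsum_of_fix:
  assumes "d \<ge> 2" "M *v cvec d = (cvec d :: real^'n)"
  shows "(\<Sum>j\<in>UNIV. M$i$j) = 1"
proof -
  have "(M *v cvec d)$i = 1 / (real d)^2" using assms(2) by simp
  then show ?thesis using assms(1) by (simp add: mv_cvec)
qed

lemma colsum_of_fix:
  fixes M :: "real^'n^'n"
  assumes "d \<ge> 2" "M *v cvec d = cvec d" "orthogonal_matrix M"
  shows "(\<Sum>i\<in>UNIV. M$i$j) = 1"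
proof -
  have "transpose M *v cvec d = transpose M *v (M *v cvec d)" using assms(2) by simp
  also have "\<dots> = cvec d" using assms(3) by (simp add: matrix_vector_mul_assoc orthogonal_matrix_def)
  finally have "(\<Sum>i\<in>UNIV. (transpose M)$j$i) = 1" by (rule rowsum_of_fix[OF assms(1)])
  then show ?thesis by (simp add: transpose_def)
qed

lemma meas_apply_eq:
  assumes "q \<in> hypH"
  shows "meas_apply d r q = stretched d r *v (q::real^'n)"
proof -
  have "(\<Sum>j\<in>UNIV. ((real d + 1) * q $ j - 1 / real d) * r i j)
      = (\<Sum>j\<in>UNIV. ((real d + 1) * r i j - 1 / real d * (\<Sum>k\<in>UNIV. r i k)) * q $ j)" for i
  proof -
    have "(\<Sum>j\<in>UNIV. ((real d + 1) * q $ j - 1 / real d) * r i j)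
        = (real d + 1) * (\<Sum>j\<in>UNIV. r i j * q $ j) - 1 / real d * (\<Sum>j\<in>UNIV. r i j)"
      by (simp add: algebra_simps sum_subtractf sum_distrib_left sum_divide_distrib)
    moreover have "(\<Sum>j\<in>UNIV. ((real d + 1) * r i j - 1 / real d * (\<Sum>k\<in>UNIV. r i k)) * q $ j)
        = (real d + 1) * (\<Sum>j\<in>UNIV. r i j * q $ j) - 1 / real d * (\<Sum>k\<in>UNIV. r i k) * (\<Sum>j\<in>UNIV. q $ j)"
      by (simp add: algebra_simps sum_subtractf sum_distrib_left sum_divide_distrib) (rule sum.swap)
    moreover have "(\<Sum>j\<in>UNIV. q $ j) = 1" using assms by (simp add: hypH_def)
    ultimately show ?thesis by simp
  qed
  then show ?thesis
    by (simp add: vec_eq_iff meas_apply_def stretched_def matrix_vector_mult_def)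
qed

lemma colsum_stretched:
  assumes "CARD('n) = d^2" "d \<ge> 2" "measurement (r :: 'n::finite \<Rightarrow> 'n \<Rightarrow> real)"
  shows "(\<Sum>i\<in>UNIV. stretched d r $ i $ j) = 1"
proof -
  have cs: "\<And>j. (\<Sum>i\<in>UNIV. r i j) = 1" using assms(3) by (simp add: measurement_def)
  have "(\<Sum>i\<in>UNIV. stretched d r $ i $ j)
      = (real d + 1) * (\<Sum>i\<in>UNIV. r i j) - 1 / real d * (\<Sum>i\<in>UNIV. \<Sum>k\<in>UNIV. r i k)"
    by (simp add: stretched_def sum_subtractf sum_distrib_left)
  also have "(\<Sum>i\<in>UNIV. \<Sum>k\<in>UNIV. r i k) = (\<Sum>k\<in>UNIV. \<Sum>i\<in>UNIV. r i k)" by (rule sum.swap)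
  also have "\<dots> = real d ^ 2" using cs assms(1) by simp
  finally show ?thesis using cs assms(2) by (simp add: power2_eq_square)
qed




lemma inner_one: "inner ((\<chi> i. 1)::real^'n) u = (\<Sum>i\<in>UNIV. u$i)"
  by (simp add: inner_vec_def)

lemma qpolar_eq: "qpolar d (A::(real^'n) set) = {u. inner ((\<chi> i. 1)::real^'n) u = 1} \<inter> (\<Inter>v\<in>A. {u. inner v u \<ge> 1 / (real d * (real d + 1))})"
proof -
  have c: "\<And>u v. inner (v::real^'n) u = inner u v" by (rule inner_commute)
  have o: "\<And>u. inner u ((\<chi> i. 1)::real^'n) = (\<Sum>i\<in>UNIV. u$i)" by (simp add: inner_vec_def)
  show ?thesis by (simp add: qpolar_def hypH_def inner_one o set_eq_iff c)
qed

lemma qpolar_closed: "closed (qpolar d (A :: (real^'n) set))"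
  unfolding qpolar_eq by (intro closed_Int closed_hyperplane closed_INT ballI closed_halfspace_ge)

lemma qpolar_convex: "convex (qpolar d (A :: (real^'n) set))"
  unfolding qpolar_eq by (intro convex_Int convex_hyperplane convex_INT convex_halfspace_ge)

lemma qpolar_anti: "A \<subseteq> B \<Longrightarrow> qpolar d B \<subseteq> qpolar d A"
  by (auto simp: qpolar_def)

lemma germ_inner:
  fixes R :: "real^'n^'n" and v :: "real^'n"
  shows "inner (\<chi> j. (D * R$i$j + 1)/E) v = (D * (R *v v)$i + (\<Sum>j\<in>UNIV. v$j)) / E"
proof -
  have "inner (\<chi> j. (D * R$i$j + 1)/E) v = (\<Sum>j\<in>UNIV. (D * R$i$j + 1)/E * v$j)"
    by (simp add: inner_vec_def)
  also have "\<dots> = (\<Sum>j\<in>UNIV. (D * (R$i$j * v$j) + v$j) / E)"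
    by (rule sum.cong) (auto simp: algebra_simps)
  also have "\<dots> = (D * (\<Sum>j\<in>UNIV. R$i$j * v$j) + (\<Sum>j\<in>UNIV. v$j)) / E"
    by (simp add: sum_divide_distrib[symmetric] sum.distrib sum_distrib_left)
  also have "(\<Sum>j\<in>UNIV. R$i$j * v$j) = (R *v v)$i"
    by (simp add: matrix_vector_mult_def)
  finally show ?thesis .
qed

lemma germ_sum:
  fixes R :: "real^'n^'n"
  assumes "CARD('n) = d^2" "d \<ge> 2" "(\<Sum>j\<in>UNIV. R$i$j) = 1"
  shows "(\<Sum>j\<in>UNIV. (\<chi> j. (real d * R$i$j + 1)/(real d * (real d + 1))) $ j) = 1"
proof -
  have "(\<Sum>j\<in>UNIV. (\<chi> j. (real d * R$i$j + 1)/(real d * (real d + 1))) $ j)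
      = (real d * (\<Sum>j\<in>UNIV. R$i$j) + real d ^ 2) / (real d * (real d + 1))"
    using assms(1) by (simp add: sum_divide_distrib[symmetric] sum.distrib sum_distrib_left)
  also have "\<dots> = 1"
  proof -
    have "real d \<ge> 2" using assms(2) by simp
    then have "0 < real d * real d" "0 < real d" by auto
    then have hp: "real d + real d * real d \<noteq> 0" by linarith
    then show ?thesis using assms(3) by (simp add: power2_eq_square algebra_simps)
  qed
  finally show ?thesis .
qed




theorem mainTheorem15:
  fixes d :: nat and \<G> :: "(real^'n^'n) set"
  assumes "d \<ge> 2" and "CARD('n) = d^2"
    and "strongly_maximal d \<G>"
  shows "qplex d (closure (convex hull (orbital_germ d \<G>))) \<and>
         \<G> = preservation_group d (closure (convex hull (orbital_germ d \<G>))) \<and>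
         (\<forall>Q :: (real^'n) set. qplex d Q \<and> \<G> = preservation_group d Q \<longrightarrow>
             Q = closure (convex hull (orbital_germ d \<G>)))"
proof -
  note d2 = assms(1) and card = assms(2)
  define G where "G = orbital_germ d \<G>"
  define Q0 where "Q0 = closure (convex hull G)"
  define E where "E = real d * (real d + 1)"
  have Dp: "real d > 0" "real d \<ge> 2" using d2 by auto
  have Ep: "E > 0" using Dp by (simp add: E_def)
  have maxs: "maximal_stochastic d \<G>" and qp0: "qplex d Q0"
    using assms(3) by (auto simp: strongly_maximal_def Q0_def G_def)
  have st: "stochastic_subgroup d \<G>" using maxs by (simp add: maximal_stochastic_def)
  have osg: "orth_subgroup \<G>" using st by (simp add: stochastic_subgroup_def)
  have Gorth: "orthogonal_matrix R" if "R \<in> \<G>" for R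
    using osg that by (auto simp: orth_subgroup_def)
  have Gfix: "R *v cvec d = cvec d" if "R \<in> \<G>" for R
    using st that by (auto simp: stochastic_subgroup_def)
  have Gmul: "A ** B \<in> \<G>" if "A \<in> \<G>" "B \<in> \<G>" for A B
    using osg that by (auto simp: orth_subgroup_def)
  have Gid: "mat 1 \<in> \<G>" using osg by (simp add: orth_subgroup_def)
  have Gtr: "transpose R \<in> \<G>" if "R \<in> \<G>" for R
  proof -
    have "matrix_inv R \<in> \<G>" using osg that by (auto simp: orth_subgroup_def)
    then show ?thesis using orth_inv[OF Gorth[OF that]] by simp
  qed
  have Grow: "(\<Sum>j\<in>UNIV. R$i$j) = 1" if "R \<in> \<G>" for R i
    using rowsum_of_fix[OF d2 Gfix[OF that]] .
  have Gmem: "(\<chi> j. (real d * R$i$j + 1)/E) \<in> G" if "R \<in> \<G>" for R i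
    unfolding G_def orbital_germ_def E_def using that by blast
  have germ_img: "(\<lambda>x. R *v x) ` G \<subseteq> G" if R: "R \<in> \<G>" for R
  proof
    fix y assume "y \<in> (\<lambda>x. R *v x) ` G"
    then obtain s where s: "s \<in> G" "y = R *v s" by (rule imageE)
    from s(1) obtain R' i where R': "R' \<in> \<G>" "s = (\<chi> j. (real d * R'$i$j + 1)/E)"
      unfolding G_def orbital_germ_def E_def by blast
    have "y = (\<chi> k. (real d * (R' ** transpose R)$i$k + 1)/E)"
      unfolding s(2) R'(2) by (simp add: vec_eq_iff mv_germ Grow[OF R])
    moreover have "R' ** transpose R \<in> \<G>" using Gmul[OF R'(1) Gtr[OF R]] .
    ultimately show "y \<in> G" using Gmem by simp
  qed
  have Q0_sub: "(\<lambda>x. R *v x) ` Q0 \<subseteq> Q0" if R: "R \<in> \<G>" for R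
  proof -
    have lin: "linear (\<lambda>x. R *v x)" by simp
    have "(\<lambda>x. R *v x) ` Q0 \<subseteq> closure ((\<lambda>x. R *v x) ` (convex hull G))"
      unfolding Q0_def by (rule closure_linear_image_subset[OF lin])
    also have "(\<lambda>x. R *v x) ` (convex hull G) = convex hull ((\<lambda>x. R *v x) ` G)"
      by (rule convex_hull_linear_image[OF lin])
    also have "closure (convex hull ((\<lambda>x. R *v x) ` G)) \<subseteq> Q0"
      unfolding Q0_def by (intro closure_mono hull_mono germ_img[OF R])
    finally show ?thesis .
  qed
  have Q0_img: "(\<lambda>x. R *v x) ` Q0 = Q0" if R: "R \<in> \<G>" for R
  proof
    show "(\<lambda>x. R *v x) ` Q0 \<subseteq> Q0" by (rule Q0_sub[OF R])
    show "Q0 \<subseteq> (\<lambda>x. R *v x) ` Q0"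
    proof
      fix x assume x: "x \<in> Q0"
      have "transpose R *v x \<in> Q0" using Q0_sub[OF Gtr[OF R]] x by blast
      moreover have "R *v (transpose R *v x) = x"
      proof -
        have RRt: "R ** transpose R = mat 1" using Gorth[OF R] by (simp add: orthogonal_matrix_def)
        show ?thesis by (simp only: matrix_vector_mul_assoc RRt matrix_vector_mul_lid)
      qed
      ultimately show "x \<in> (\<lambda>x. R *v x) ` Q0" by (metis image_eqI)
    qed
  qed
  define GG where "GG = {M. orthogonal_matrix M \<and> M *v cvec d = cvec d \<and> (\<lambda>x. M *v x) ` Q0 = Q0}"
  define g where "g = (\<lambda>i. (\<chi> j. (real d * (mat 1::real^'n^'n)$i$j + 1)/E))"
  have gG: "g i \<in> G" for i unfolding g_def using Gmem[OF Gid] .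
  have gQ0: "g i \<in> Q0" for i
    using gG[of i] unfolding Q0_def by (meson closure_subset hull_subset subsetD)
  have e1: "(real d + 1) / E = 1 / real d" using Dp unfolding E_def by simp
  have gii: "g i $ i = 1 / real d" for i using e1 by (simp add: g_def mat_def)
  have gij: "g i $ j = 1 / E" if "i \<noteq> j" for i j using that by (simp add: g_def mat_def)
  have cQ0: "cvec d \<in> Q0" by (rule qp_c[OF card d2 qp0])
  have Q0hyp: "q \<in> hypH" if "q \<in> Q0" for q using qp_hyp[OF qp0 that] .
  have GGent: "M$i$j \<ge> - 1 / real d" if M: "M \<in> GG" for M i j
  proof -
    have img: "(\<lambda>x. M *v x) ` Q0 = Q0" and fx: "M *v cvec d = cvec d" using M by (auto simp: GG_def)
    have "M *v g j \<in> Q0" using img gQ0[of j] by blast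
    then have nn: "(M *v g j)$i \<ge> 0" using qp_nonneg[OF qp0] by blast
    have "(M *v g j)$i = (real d * (mat 1 ** transpose M)$j$i + (\<Sum>k\<in>UNIV. M$i$k)) / E"
      unfolding g_def by (rule mv_germ)
    also have "\<dots> = (real d * M$i$j + 1) / E"
      using rowsum_of_fix[OF d2 fx] by (simp add: transpose_def)
    finally have "(real d * M$i$j + 1) / E \<ge> 0" using nn by simp
    then have "real d * M$i$j + 1 \<ge> 0" using Ep by (simp add: zero_le_divide_iff)
    then have "-1 \<le> M$i$j * real d" by (simp add: mult.commute)
    then have "(-1) / real d \<le> M$i$j" by (rule pos_divide_le_eq[OF Dp(1), THEN iffD2])
    then show ?thesis by simp
  qed
  have GGtr: "transpose M \<in> GG" if M: "M \<in> GG" for M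
  proof -
    have o: "orthogonal_matrix M" and img: "(\<lambda>x. M *v x) ` Q0 = Q0" and fx: "M *v cvec d = cvec d"
      using M by (auto simp: GG_def)
    have MtM: "transpose M ** M = mat 1" and MMt: "M ** transpose M = mat 1"
      using o by (auto simp: orthogonal_matrix_def)
    have a: "transpose M *v (M *v x) = x" for x by (simp only: matrix_vector_mul_assoc MtM matrix_vector_mul_lid)
    have b: "M *v (transpose M *v x) = x" for x by (simp only: matrix_vector_mul_assoc MMt matrix_vector_mul_lid)
    have "transpose M *v cvec d = cvec d" using a[of "cvec d"] fx by simp
    moreover have "(\<lambda>x. transpose M *v x) ` Q0 = Q0"
    proof
      show "(\<lambda>x. transpose M *v x) ` Q0 \<subseteq> Q0"
      proof
        fix y assume "y \<in> (\<lambda>x. transpose M *v x) ` Q0"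
        then obtain x where x: "x \<in> Q0" "y = transpose M *v x" by (rule imageE)
        have "x \<in> (\<lambda>x. M *v x) ` Q0" using img x(1) by simp
        then obtain z where z: "z \<in> Q0" "x = M *v z" by (rule imageE)
        show "y \<in> Q0" using x(2) z a by simp
      qed
      show "Q0 \<subseteq> (\<lambda>x. transpose M *v x) ` Q0"
      proof
        fix x assume x: "x \<in> Q0"
        have "M *v x \<in> Q0" using img x by blast
        moreover have "transpose M *v (M *v x) = x" by (rule a)
        ultimately show "x \<in> (\<lambda>x. transpose M *v x) ` Q0" by (metis image_eqI)
      qed
    qed
    ultimately show ?thesis using o by (simp add: GG_def)
  qed
  have GGmul: "A ** B \<in> GG" if "A \<in> GG" "B \<in> GG" for A B
  proof -
    have "orthogonal_matrix A" "orthogonal_matrix B" "A *v cvec d = cvec d" "B *v cvec d = cvec d"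
      "(\<lambda>x. A *v x) ` Q0 = Q0" "(\<lambda>x. B *v x) ` Q0 = Q0" using that by (auto simp: GG_def)
    moreover have "(\<lambda>x. (A ** B) *v x) ` Q0 = (\<lambda>x. A *v x) ` ((\<lambda>x. B *v x) ` Q0)"
      by (simp add: image_image matrix_vector_mul_assoc)
    ultimately show ?thesis
      by (simp add: GG_def orthogonal_matrix_mul matrix_vector_mul_assoc[symmetric])
  qed
  have GGst: "stochastic_subgroup d GG"
  proof -
    have id: "mat 1 \<in> GG" by (simp add: GG_def orthogonal_matrix_id)
    have inv: "matrix_inv A \<in> GG" if "A \<in> GG" for A
    proof -
      have "orthogonal_matrix A" using that by (simp add: GG_def)
      then have "matrix_inv A = transpose A" by (rule orth_inv)
      then show ?thesis using GGtr[OF that] by simp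
    qed
    have sub: "GG \<subseteq> {A. orthogonal_matrix A}" by (auto simp: GG_def)
    have fx: "R *v cvec d = cvec d" if "R \<in> GG" for R using that by (simp add: GG_def)
    have "orth_subgroup GG" unfolding orth_subgroup_def using id inv sub GGmul by blast
    then show ?thesis using GGent fx unfolding stochastic_subgroup_def by blast
  qed
  have GsubGG: "\<G> \<subseteq> GG"
  proof
    fix R assume R: "R \<in> \<G>"
    show "R \<in> GG" unfolding GG_def using Gorth[OF R] Gfix[OF R] Q0_img[OF R] by simp
  qed
  have GGeq: "GG = \<G>" using maxs GGst GsubGG by (auto simp: maximal_stochastic_def)
  have sp: "span Q0 = UNIV"
  proof -
    have ax: "axis j 1 \<in> span Q0" for j
    proof -
      have "axis j 1 = (real d + 1) *\<^sub>R g j - real d *\<^sub>R cvec d"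
      proof (rule vec_eq_iff[THEN iffD2], rule allI)
        fix k
        show "axis j 1 $ k = ((real d + 1) *\<^sub>R g j - real d *\<^sub>R cvec d) $ k"
        proof (cases "j = k")
          case True
          have "(real d + 1) * (1 / real d) - real d * (1 / (real d)^2) = 1"
            using Dp by (simp add: field_simps power2_eq_square)
          then show ?thesis using True gii by (simp add: axis_def)
        next
          case False
          have h1: "(real d + 1) * (1 / E) = 1 / real d" using e1 by simp
          have h2: "real d * (1 / (real d)^2) = 1 / real d" using Dp by (simp add: power2_eq_square)
          have "(real d + 1) * (1 / E) - real d * (1 / (real d)^2) = 0" using h1 h2 by simp
          then show ?thesis using False gij[OF False] by (simp add: axis_def)
        qed
      qed
      moreover have "(real d + 1) *\<^sub>R g j - real d *\<^sub>R cvec d \<in> span Q0"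
        using gQ0 cQ0 by (intro span_diff span_scale span_base)
      ultimately show ?thesis by simp
    qed
    have "x \<in> span Q0" for x
    proof -
      have "(\<Sum>i\<in>UNIV. (x$i) *s axis i 1) \<in> span Q0"
        using ax by (intro span_sum) (simp add: scalar_mult_eq_scaleR span_scale)
      then show ?thesis by (simp add: basis_expansion)
    qed
    then show ?thesis by auto
  qed
  have gpts: "\<exists>q\<in>Q0. q$i = 1 / real d" for i using gQ0 gii by blast
  have PsubGG: "preservation_group d Q0 \<subseteq> GG"
  proof
    fix R assume "R \<in> preservation_group d Q0"
    then obtain r where r: "measurement r" "Q_preserving d Q0 r" "R = stretched d r"
      by (auto simp: preservation_group_def)
    have "(\<lambda>x. R *v x) ` Q0 = meas_apply d r ` Q0"
    proof (rule image_cong[OF refl])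
      fix x assume "x \<in> Q0"
      show "R *v x = meas_apply d r x" using meas_apply_eq[OF Q0hyp[OF \<open>x \<in> Q0\<close>], of d r] r(3) by simp
    qed
    also have "\<dots> = Q0" using r(2) by (simp add: Q_preserving_def)
    finally have img: "(\<lambda>x. R *v x) ` Q0 = Q0" .
    have cs: "\<And>j. (\<Sum>i\<in>UNIV. R$i$j) = 1" using colsum_stretched[OF card d2 r(1)] r(3) by simp
    have "orthogonal_matrix R \<and> R *v cvec d = cvec d"
      by (rule orth_lemma[OF card d2 qp0 img cs gpts sp])
    then show "R \<in> GG" using img by (simp add: GG_def)
  qed
  have GGsubP: "GG \<subseteq> preservation_group d Q0"
  proof
    fix M assume M: "M \<in> GG"
    have o: "orthogonal_matrix M" and fx: "M *v cvec d = cvec d" and img: "(\<lambda>x. M *v x) ` Q0 = Q0"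
      using M by (auto simp: GG_def)
    have cs: "(\<Sum>i\<in>UNIV. M$i$j) = 1" for j by (rule colsum_of_fix[OF d2 fx o])
    have rs: "(\<Sum>j\<in>UNIV. M$i$j) = 1" for i by (rule rowsum_of_fix[OF d2 fx])
    define r where "r = (\<lambda>i j. (M$i$j + 1/real d)/(real d + 1))"
    have dd: "real d ^ 2 * (1 / real d) = real d" using Dp by (simp add: power2_eq_square)
    have rcol: "(\<Sum>i\<in>UNIV. r i j) = 1" for j
    proof -
      have "(\<Sum>i\<in>UNIV. r i j) = ((\<Sum>i\<in>UNIV. M$i$j) + real d ^ 2 * (1/real d))/(real d + 1)"
        using card by (simp add: r_def sum_divide_distrib[symmetric] sum.distrib)
      also have "\<dots> = 1" using cs[of j] dd Dp by simp
      finally show ?thesis .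
    qed
    have rrow: "(\<Sum>j\<in>UNIV. r i j) = 1" for i
    proof -
      have "(\<Sum>j\<in>UNIV. r i j) = ((\<Sum>j\<in>UNIV. M$i$j) + real d ^ 2 * (1/real d))/(real d + 1)"
        using card by (simp add: r_def sum_divide_distrib[symmetric] sum.distrib)
      also have "\<dots> = 1" using rs[of i] dd Dp by simp
      finally show ?thesis .
    qed
    have rnn: "r i j \<ge> 0" for i j
    proof -
      have "- 1 / real d \<le> M$i$j" by (rule GGent[OF M])
      then have "0 \<le> M$i$j + 1/real d" by simp
      then show ?thesis unfolding r_def using Dp by simp
    qed
    have meas: "measurement r" unfolding measurement_def using rnn rcol by simp
    have str: "stretched d r = M"
    proof -
      have "(real d + 1) * r i j - 1 / real d * (\<Sum>k\<in>UNIV. r i k) = M$i$j" for i j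
      proof -
        have "(real d + 1) * r i j = M$i$j + 1/real d" unfolding r_def using Dp by simp
        then show ?thesis using rrow[of i] by simp
      qed
      then show ?thesis by (simp add: stretched_def vec_eq_iff)
    qed
    have "meas_apply d r ` Q0 = (\<lambda>x. M *v x) ` Q0"
    proof (rule image_cong[OF refl])
      fix x assume "x \<in> Q0"
      show "meas_apply d r x = M *v x" using meas_apply_eq[OF Q0hyp[OF \<open>x \<in> Q0\<close>], of d r] str by simp
    qed
    then have "Q_preserving d Q0 r" using img by (simp add: Q_preserving_def)
    then show "M \<in> preservation_group d Q0" unfolding preservation_group_def using meas str by auto
  qed
  have uniq: "Q = Q0" if qp: "qplex d Q" and eqG: "\<G> = preservation_group d Q" for Q
  proof -
    have qpQ: "qpolar d Q = Q" using qp by (simp add: qplex_def)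
    have GQ: "G \<subseteq> Q"
    proof
      fix s assume "s \<in> G"
      then obtain R i where R: "R \<in> \<G>" "s = (\<chi> j. (real d * R$i$j + 1)/E)"
        unfolding G_def orbital_germ_def E_def by blast
      have "R \<in> preservation_group d Q" using R(1) eqG by simp
      then obtain r where r: "measurement r" "Q_preserving d Q r" "R = stretched d r"
        by (auto simp: preservation_group_def)
      have RQ: "R *v v \<in> Q" if "v \<in> Q" for v
      proof -
        have "R *v v = meas_apply d r v" using meas_apply_eq[OF qp_hyp[OF qp that], of d r] r(3) by simp
        moreover have "meas_apply d r v \<in> Q" using r(2) that unfolding Q_preserving_def by blast
        ultimately show ?thesis by simp
      qed
      show "s \<in> Q"
      proof (rule qp_polar[OF qp])
        show "s \<in> hypH" unfolding hypH_def R(2) E_def using germ_sum[OF card d2 Grow[OF R(1)]] by simp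
      next
        fix v assume v: "v \<in> Q"
        have "inner s v = (real d * (R *v v)$i + (\<Sum>j\<in>UNIV. v$j)) / E"
          unfolding R(2) by (rule germ_inner)
        also have "(\<Sum>j\<in>UNIV. v$j) = 1" using qp_hyp[OF qp v] by (simp add: hypH_def)
        finally have iv: "inner s v = (real d * (R *v v)$i + 1) / E" .
        have "(R *v v)$i \<ge> 0" using qp_nonneg[OF qp RQ[OF v]] .
        then have "1 / E \<le> (real d * (R *v v)$i + 1) / E" using Ep Dp by (intro divide_right_mono) auto
        then show "1 / (real d * (real d + 1)) \<le> inner s v" using iv by (simp add: E_def)
      qed
    qed
    have "convex hull G \<subseteq> Q"
      using GQ qpolar_convex[of d Q] qpQ by (intro hull_minimal) auto
    then have Q0Q: "Q0 \<subseteq> Q"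
      unfolding Q0_def using qpolar_closed[of d Q] qpQ by (intro closure_minimal) auto
    have "Q \<subseteq> Q0"
    proof -
      have "qpolar d Q \<subseteq> qpolar d Q0" by (rule qpolar_anti[OF Q0Q])
      then show ?thesis using qpQ qp0 by (simp add: qplex_def)
    qed
    then show ?thesis using Q0Q by blast
  qed
  have "\<G> = preservation_group d Q0" using GGeq PsubGG GGsubP by blast
  then show ?thesis using qp0 uniq unfolding Q0_def G_def by blast
qed

end
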